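(* Consider the network and loss from the context with $\alpha^-=0$. Let $\overline{\mathbf{P}}$ be a stationary point of the loss of the network with hidden neurons $I$. Let $\overline{\mathbf{P}}'$ be obtained by adding a finite set $I^-$ of new hidden neurons $i^-$ with input weights $\mathbf{w}_{i^-}$ satisfying $\mathbf{w}_{i^-}\cdot\mathbf{x}_k<0$ for all $k\in K$ and arbitrary output weights $h_{ji^-}$ ($j\in J$), all other parameters unchanged. Then $\overline{\mathbf{P}}'$ is a stationary point of the loss of the widened network (with hidden neurons $I\cup I^-$).
   Context: Fix an integer $d>1$, finite index sets $I$ (hidden), $J$ (output), $K$ (samples), reals $\alpha^+\ne\alpha^-$, and $\rho(z)=\alpha^+z$ for $z\ge0$, $\rho(z)=\alpha^-z$ for $z<0$. For a network with finite hidden index set $\tilde I$, parameters $\mathbf{P}$ consist of $\mathbf{w}_i\in\mathbb{R}^d$ and $h_{ji}\in\mathbb{R}$ ($i\in\tilde I$, $j\in J$), output $\hat{\mathbf{y}}(\mathbf{P};\mathbf{x})_j=\sum_{i\in\tilde I}h_{ji}\rho(\mathbf{w}_i\cdot\mathbf{x})$, and loss $\mathcal{L}(\mathbf{P})=\frac12\sum_{k\in K}\|\hat{\mathbf{y}}(\mathbf{P};\mathbf{x}_k)-\mathbf{y}_k\|^2$ for training data $(\mathbf{x}_k,\mathbf{y}_k)_{k\in K}$. A point $\overline{\mathbf{P}}$ is a stationary point if $\lim_{\alpha\to0^+}\frac{\mathcal{L}(\overline{\mathbf{P}}+\alpha\mathbf{d})-\mathcal{L}(\overline{\mathbf{P}})}{\alpha}\ge0$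 for all directions $\mathbf{d}$ in parameter space. *)

theory Defs
  imports "HOL-Analysis.Analysis"
begin

definition rho :: "real \<Rightarrow> real \<Rightarrow> real \<Rightarrow> real" where
  "rho ap am z = (if z \<ge> 0 then ap * z else am * z)"

definition net_out :: "real \<Rightarrow> real \<Rightarrow> 'i set \<Rightarrow> ('i \<Rightarrow> real^'d) \<Rightarrow> ('j \<Rightarrow> 'i \<Rightarrow> real)
    \<Rightarrow> real^'d \<Rightarrow> 'j \<Rightarrow> real" where
  "net_out ap am Hid w h x j = (\<Sum>i\<in>Hid. h j i * rho ap am (w i \<bullet> x))"

definition loss :: "real \<Rightarrow> real \<Rightarrow> 'i set \<Rightarrow> 'j set \<Rightarrow> 'k set \<Rightarrow> ('k \<Rightarrow> real^'d)
    \<Rightarrow> ('k \<Rightarrow> 'j \<Rightarrow> real) \<Rightarrow> ('i \<Rightarrow> real^'d) \<Rightarrow> ('j \<Rightarrow> 'i \<Rightarrow> real) \<Rightarrow> real" where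
  "loss ap am Hid J K xs ys w h =
     (1/2) * (\<Sum>k\<in>K. \<Sum>j\<in>J. (net_out ap am Hid w h (xs k) j - ys k j)^2)"

text \<open>Directions are arbitrary perturbations of all
  parameters (only those indexed by Hid affect the loss).\<close>
definition stationary :: "real \<Rightarrow> real \<Rightarrow> 'i set \<Rightarrow> 'j set \<Rightarrow> 'k set \<Rightarrow> ('k \<Rightarrow> real^'d)
    \<Rightarrow> ('k \<Rightarrow> 'j \<Rightarrow> real) \<Rightarrow> ('i \<Rightarrow> real^'d) \<Rightarrow> ('j \<Rightarrow> 'i \<Rightarrow> real) \<Rightarrow> bool" where
  "stationary ap am Hid J K xs ys w h \<longleftrightarrow>
     (\<forall>(dw :: 'i \<Rightarrow> real^'d) (dh :: 'j \<Rightarrow> 'i \<Rightarrow> real). \<exists>L.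
        ((\<lambda>a. (loss ap am Hid J K xs ys (\<lambda>i. w i + a *\<^sub>R dw i) (\<lambda>j i. h j i + a * dh j i)
               - loss ap am Hid J K xs ys w h) / a) \<longlongrightarrow> L) (at_right 0) \<and> L \<ge> 0)"

end

theory Submission
  imports Defs
begin

lemma net_split:
  assumes "finite I" "finite M" "I \<inter> M = {}"
    and "\<forall>i\<in>M. W i \<bullet> x < 0"
    and "\<forall>i\<in>I. W i = V i" and "\<forall>i\<in>I. H j i = G j i"
  shows "net_out ap 0 (I \<union> M) W H x j = net_out ap 0 I V G x j"
proof -
  have "net_out ap 0 (I \<union> M) W H x j = (\<Sum>i\<in>I. H j i * rho ap 0 (W i \<bullet> x)) + (\<Sum>i\<in>M. H j i * rho ap 0 (W i \<bullet> x))"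
    unfolding net_out_def using assms by (simp add: sum.union_disjoint)
  also have "(\<Sum>i\<in>M. H j i * rho ap 0 (W i \<bullet> x)) = 0"
    using assms(4) by (intro sum.neutral) (auto simp: rho_def)
  also have "(\<Sum>i\<in>I. H j i * rho ap 0 (W i \<bullet> x)) = net_out ap 0 I V G x j"
    unfolding net_out_def using assms by (intro sum.cong) auto
  finally show ?thesis by simp
qed

lemma loss_split:
  assumes "finite I" "finite M" "I \<inter> M = {}" "am = 0"
    and "\<forall>i\<in>M. \<forall>k\<in>K. W i \<bullet> xs k < 0"
    and "\<forall>i\<in>I. W i = V i" and "\<forall>j. \<forall>i\<in>I. H j i = G j i"
  shows "loss ap am (I \<union> M) J K xs ys W H = loss ap am I J K xs ys V G"
proof -
  have "\<And>k j. k \<in> K \<Longrightarrow> net_out ap 0 (I \<union> M) W H (xs k) j = net_out ap 0 I V G (xs k) j"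
    using assms by (intro net_split) auto
  then show ?thesis unfolding loss_def assms(4) by simp
qed

theorem proposition5:
  fixes ap am :: real
    and I Im :: "'i set" and J :: "'j set" and K :: "'k set"
    and xs :: "'k \<Rightarrow> real^'d" and ys :: "'k \<Rightarrow> 'j \<Rightarrow> real"
    and w wm :: "'i \<Rightarrow> real^'d" and h hm :: "'j \<Rightarrow> 'i \<Rightarrow> real"
  assumes "CARD('d) > 1"
    and "finite I" and "finite J" and "finite K" and "finite Im"
    and "I \<inter> Im = {}"
    and "ap \<noteq> am" and "am = 0"
    and "stationary ap am I J K xs ys w h"
    and "\<forall>i\<in>Im. \<forall>k\<in>K. wm i \<bullet> xs k < 0"
  shows "stationary ap am (I \<union> Im) J K xs ys
           (\<lambda>i. if i \<in> I then w i else wm i) (\<lambda>j i. if i \<in> I then h j i else hm j i)"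
  unfolding stationary_def
proof (intro allI)
  fix dw :: "'i \<Rightarrow> real^'d" and dh :: "'j \<Rightarrow> 'i \<Rightarrow> real"
  obtain L where L: "((\<lambda>a. (loss ap am I J K xs ys (\<lambda>i. w i + a *\<^sub>R dw i) (\<lambda>j i. h j i + a * dh j i)
               - loss ap am I J K xs ys w h) / a) \<longlongrightarrow> L) (at_right 0)" "L \<ge> 0"
    using assms(9) unfolding stationary_def by blast
  let ?W = "\<lambda>i. if i \<in> I then w i else wm i"
  let ?H = "\<lambda>j i. if i \<in> I then h j i else hm j i"
  have ev1: "\<forall>i\<in>Im. \<forall>k\<in>K. eventually (\<lambda>a. (?W i + a *\<^sub>R dw i) \<bullet> xs k < 0) (at_right (0::real))"
  proof (intro ballI)
    fix i k assume ik: "i \<in> Im" "k \<in> K"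
    have "((\<lambda>a. wm i \<bullet> xs k + a * (dw i \<bullet> xs k)) \<longlongrightarrow> wm i \<bullet> xs k + 0 * (dw i \<bullet> xs k)) (at_right (0::real))"
      by (intro tendsto_intros)
    then have "eventually (\<lambda>a. wm i \<bullet> xs k + a * (dw i \<bullet> xs k) < 0) (at_right (0::real))"
      using assms(10) ik by (intro order_tendstoD(2)) auto
    then show "eventually (\<lambda>a. (?W i + a *\<^sub>R dw i) \<bullet> xs k < 0) (at_right (0::real))"
      using ik assms(6) by (auto simp: inner_add_left elim!: eventually_mono)
  qed
  have ev: "eventually (\<lambda>a. \<forall>i\<in>Im. \<forall>k\<in>K. (?W i + a *\<^sub>R dw i) \<bullet> xs k < 0) (at_right (0::real))"
    using ev1 assms(4,5) by (intro eventually_ball_finite ballI) auto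
  have base: "loss ap am (I \<union> Im) J K xs ys ?W ?H = loss ap am I J K xs ys w h"
    using assms(2,5,6,8,10) by (intro loss_split) auto
  have EV: "eventually (\<lambda>a. (loss ap am I J K xs ys (\<lambda>i. w i + a *\<^sub>R dw i) (\<lambda>j i. h j i + a * dh j i)
               - loss ap am I J K xs ys w h) / a =
        (loss ap am (I \<union> Im) J K xs ys (\<lambda>i. ?W i + a *\<^sub>R dw i) (\<lambda>j i. ?H j i + a * dh j i)
               - loss ap am (I \<union> Im) J K xs ys ?W ?H) / a) (at_right (0::real))"
    using ev
  proof (rule eventually_mono)
    fix a :: real assume "\<forall>i\<in>Im. \<forall>k\<in>K. (?W i + a *\<^sub>R dw i) \<bullet> xs k < 0"
    then have "loss ap am (I \<union> Im) J K xs ys (\<lambda>i. ?W i + a *\<^sub>R dw i) (\<lambda>j i. ?H j i + a * dh j i)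
       = loss ap am I J K xs ys (\<lambda>i. w i + a *\<^sub>R dw i) (\<lambda>j i. h j i + a * dh j i)"
      using assms(2,5,6,8) by (intro loss_split) auto
    then show "(loss ap am I J K xs ys (\<lambda>i. w i + a *\<^sub>R dw i) (\<lambda>j i. h j i + a * dh j i)
               - loss ap am I J K xs ys w h) / a =
        (loss ap am (I \<union> Im) J K xs ys (\<lambda>i. ?W i + a *\<^sub>R dw i) (\<lambda>j i. ?H j i + a * dh j i)
               - loss ap am (I \<union> Im) J K xs ys ?W ?H) / a"
      using base by simp
  qed
  from L(1) have "((\<lambda>a. (loss ap am (I \<union> Im) J K xs ys (\<lambda>i. ?W i + a *\<^sub>R dw i) (\<lambda>j i. ?H j i + a * dh j i)
               - loss ap am (I \<union> Im) J K xs ys ?W ?H) / a) \<longlongrightarrow> L) (at_right 0)"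
    by (subst (asm) tendsto_cong[OF EV])
  with L(2) show "\<exists>L. ((\<lambda>a. (loss ap am (I \<union> Im) J K xs ys (\<lambda>i. ?W i + a *\<^sub>R dw i) (\<lambda>j i. ?H j i + a * dh j i)
               - loss ap am (I \<union> Im) J K xs ys ?W ?H) / a) \<longlongrightarrow> L) (at_right 0) \<and> 0 \<le> L"
    by blast
qed

end
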